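(* Let $q$ be a prime, $n\ge1$, and let $S \subset \mathbb{F}_q^n\times\mathbb{F}_q^n$ contain no three points of the form $(x,y),(x,y+d),(x+d,y')$ with $x,y,y'\in\mathbb{F}_q^n$, $d\in\mathbb{F}_q^n\setminus\{0\}$. Let $X\subset \mathbb{F}_q^n$ be the projection of $S$ onto the first coordinate and, for $x\in X$, let $C_x=\{y\in\mathbb{F}_q^n : (x,y)\in S\}$. Let $d\ge 0$ and let $P$ be a polynomial in $n$ variables over $\mathbb{F}_q$ that is a linear combination of monomials $x_1^{a_1}\cdots x_n^{a_n}$ with $0\le a_i\le q-1$ and $\sum a_i\le d$, and suppose $P$ vanishes at every point of $\mathbb{F}_q^n\setminus X$. Then for every $x\in X$ with $P(x)\neq 0$, $$|C_x| \le 2\, m_{d/2}(q,n),$$ where $m_{k}(q,n)$ denotes the number of monomials $x_1^{a_1}\cdots x_n^{a_n}$ with $0\le a_i\le q-1$ for all $i$ and $a_1+\dots+a_n\le k$. *)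

theory Defs
  imports "HOL-Analysis.Analysis"
begin

definition reduced_monos :: "nat \<Rightarrow> nat \<Rightarrow> (nat ^ 'n) set" where
  "reduced_monos q d = {a. (\<forall>i. a $ i \<le> q - 1) \<and> (\<Sum>i\<in>UNIV. a $ i) \<le> d}"

definition poly_eval :: "nat \<Rightarrow> nat \<Rightarrow> (nat ^ 'n \<Rightarrow> 'a::comm_ring_1) \<Rightarrow> 'a ^ 'n \<Rightarrow> 'a" where
  "poly_eval q d c x = (\<Sum>a\<in>reduced_monos q d. c a * (\<Prod>i\<in>UNIV. (x $ i) ^ (a $ i)))"

definition m_count :: "real \<Rightarrow> nat \<Rightarrow> nat \<Rightarrow> nat" where
  "m_count k q n = card {a :: nat \<Rightarrow> nat. (\<forall>i<n. a i \<le> q - 1) \<and> (\<forall>i\<ge>n. a i = 0)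
                                 \<and> real (\<Sum>i<n. a i) \<le> k}"

end

theory Submission imports Defs "HOL-Library.FuncSet" begin

lemma count_lemma:
  fixes F :: "'b \<Rightarrow> 'b \<Rightarrow> 'a::{field,finite}"
    and u :: "'k \<Rightarrow> 'b \<Rightarrow> 'a"
  assumes fC: "finite C" and fI: "finite I" and fM: "finite M" and z: "z \<noteq> 0"
    and diag: "\<And>a b. a \<in> C \<Longrightarrow> b \<in> C \<Longrightarrow> F a b = (if a = b then z else 0)"
    and rep: "\<And>a b. a \<in> C \<Longrightarrow> b \<in> C \<Longrightarrow> F a b = (\<Sum>s\<in>I. w s * u (\<alpha> s) a * u (\<beta> s) b)"
    and spl: "\<And>s. s \<in> I \<Longrightarrow> \<alpha> s \<in> M \<or> \<beta> s \<in> M"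
  shows "card C \<le> 2 * card M"
proof -
  define I1 where "I1 = {s\<in>I. \<alpha> s \<in> M}"
  define I2 where "I2 = I - I1"
  have fI1: "finite I1" and fI2: "finite I2" using fI by (auto simp: I1_def I2_def)
  have I2M: "\<beta> s \<in> M" if "s \<in> I2" for s using spl that by (auto simp: I1_def I2_def)
  have I12: "I = I1 \<union> I2" "I1 \<inter> I2 = {}" by (auto simp: I1_def I2_def)
  define h where "h m a = (\<Sum>s\<in>{s\<in>I2. \<beta> s = m}. w s * u (\<alpha> s) a)" for m a
  define \<Phi> where "\<Phi> = (\<lambda>(l::'k\<Rightarrow>'a, mu::'k\<Rightarrow>'a). restrict (\<lambda>a. inverse z * ((\<Sum>m\<in>M. u m a * l m) + (\<Sum>m\<in>M. h m a * mu m))) C)"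
  have sub: "PiE C (\<lambda>_. UNIV) \<subseteq> \<Phi> ` (PiE M (\<lambda>_. UNIV) \<times> PiE M (\<lambda>_. UNIV))"
  proof
    fix v assume v: "v \<in> PiE C (\<lambda>_. UNIV :: 'a set)"
    define Bv where "Bv s = (\<Sum>b\<in>C. u (\<beta> s) b * v b)" for s
    define lam where "lam m = (\<Sum>s\<in>{s\<in>I1. \<alpha> s = m}. w s * Bv s)" for m
    define mu where "mu m = (\<Sum>b\<in>C. u m b * v b)" for m
    have "v a = inverse z * ((\<Sum>m\<in>M. u m a * lam m) + (\<Sum>m\<in>M. h m a * mu m))" if a: "a \<in> C" for a
    proof -
      have "z * v a = (\<Sum>b\<in>C. F a b * v b)"
      proof -
        have "(\<Sum>b\<in>C. F a b * v b) = (\<Sum>b\<in>C. if a = b then z * v b else 0)"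
          using a by (intro sum.cong) (auto simp: diag)
        thus ?thesis using a fC by simp
      qed
      also have "\<dots> = (\<Sum>b\<in>C. \<Sum>s\<in>I. w s * u (\<alpha> s) a * (u (\<beta> s) b * v b))"
        using a by (intro sum.cong refl) (simp add: rep sum_distrib_right mult.assoc)
      also have "\<dots> = (\<Sum>s\<in>I. w s * u (\<alpha> s) a * Bv s)"
        by (subst sum.swap) (simp add: Bv_def sum_distrib_left)
      also have "\<dots> = (\<Sum>s\<in>I1. w s * u (\<alpha> s) a * Bv s) + (\<Sum>s\<in>I2. w s * u (\<alpha> s) a * Bv s)"
        using fI1 fI2 I12 by (simp add: sum.union_disjoint)
      also have "(\<Sum>s\<in>I1. w s * u (\<alpha> s) a * Bv s) = (\<Sum>m\<in>M. u m a * lam m)"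
      proof -
        have "(\<Sum>s\<in>I1. w s * u (\<alpha> s) a * Bv s) = (\<Sum>m\<in>M. \<Sum>s\<in>{s\<in>I1. \<alpha> s = m}. w s * u (\<alpha> s) a * Bv s)"
          by (rule sum.group[symmetric]) (use fI1 fM in \<open>auto simp: I1_def\<close>)
        also have "\<dots> = (\<Sum>m\<in>M. u m a * lam m)"
          by (intro sum.cong refl) (auto simp: lam_def sum_distrib_left intro!: sum.cong)
        finally show ?thesis .
      qed
      also have "(\<Sum>s\<in>I2. w s * u (\<alpha> s) a * Bv s) = (\<Sum>m\<in>M. h m a * mu m)"
      proof -
        have "(\<Sum>s\<in>I2. w s * u (\<alpha> s) a * Bv s) = (\<Sum>m\<in>M. \<Sum>s\<in>{s\<in>I2. \<beta> s = m}. w s * u (\<alpha> s) a * Bv s)"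
          by (rule sum.group[symmetric]) (use fI2 fM I2M in \<open>auto\<close>)
        also have "\<dots> = (\<Sum>m\<in>M. h m a * mu m)"
          by (intro sum.cong refl) (auto simp: h_def mu_def Bv_def sum_distrib_right intro!: sum.cong)
        finally show ?thesis .
      qed
      finally show ?thesis using z by (simp add: field_simps)
    qed
    hence "v = \<Phi> (restrict lam M, restrict mu M)"
      using v by (auto simp: \<Phi>_def PiE_def extensional_def intro!: ext sum.cong)
    thus "v \<in> \<Phi> ` (PiE M (\<lambda>_. UNIV) \<times> PiE M (\<lambda>_. UNIV))" by auto
  qed
  have "card (UNIV::'a set) ^ card C = card (PiE C (\<lambda>_. UNIV :: 'a set))"
    using fC by (simp add: card_PiE)
  also have "\<dots> \<le> card (\<Phi> ` (PiE M (\<lambda>_. UNIV) \<times> PiE M (\<lambda>_. UNIV)))"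
    by (rule card_mono[OF _ sub]) (use fM in \<open>simp add: finite_PiE\<close>)
  also have "\<dots> \<le> card (PiE M (\<lambda>_. UNIV :: 'a set) \<times> PiE M (\<lambda>_. UNIV :: 'a set))"
    by (rule card_image_le) (use fM in \<open>simp add: finite_PiE\<close>)
  also have "\<dots> = card (UNIV::'a set) ^ (2 * card M)"
    using fM by (simp add: card_PiE card_cartesian_product power2_eq_square power_mult power_add mult_2)
  finally have le: "card (UNIV::'a set) ^ card C \<le> card (UNIV::'a set) ^ (2 * card M)" .
  have "card {0::'a, 1} \<le> card (UNIV::'a set)" by (rule card_mono) auto
  hence "1 < card (UNIV::'a set)" by simp
  thus ?thesis using le by (simp add: power_le_imp_le_exp)
qed

definition T :: "nat \<Rightarrow> (nat \<times> nat) set" where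
  "T g = Sigma {..g} (\<lambda>j. {..g-j})"

definition kc :: "'a::comm_ring_1 \<Rightarrow> nat \<Rightarrow> nat \<times> nat \<Rightarrow> 'a" where
  "kc x g jl = of_nat (g choose fst jl) * of_nat ((g - fst jl) choose snd jl) * (-1)^snd jl * x^(g - fst jl - snd jl)"

lemma finite_T: "finite (T g)" by (simp add: T_def)

lemma T_le: "jl \<in> T g \<Longrightarrow> fst jl + snd jl \<le> g" by (auto simp: T_def)

lemma coord:
  fixes x a b :: "'a::comm_ring_1"
  shows "(x + a - b)^g = (\<Sum>jl\<in>T g. kc x g jl * a^fst jl * b^snd jl)"
proof -
  have "(x + a - b)^g = (a + (-b + x))^g" by (simp add: algebra_simps)
  also have "\<dots> = (\<Sum>j\<le>g. of_nat (g choose j) * a^j * (-b + x)^(g-j))" by (rule binomial_ring)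
  also have "\<dots> = (\<Sum>j\<le>g. \<Sum>l\<le>g-j. kc x g (j,l) * a^j * b^l)"
  proof (intro sum.cong refl)
    fix j assume "j \<in> {..g}"
    have e: "(-b + x)^(g-j) = (\<Sum>l\<le>g-j. of_nat ((g-j) choose l) * (-b)^l * x^(g-j-l))" by (rule binomial_ring)
    show "of_nat (g choose j) * a^j * (-b + x)^(g-j) = (\<Sum>l\<le>g-j. kc x g (j,l) * a^j * b^l)"
      unfolding e sum_distrib_left by (intro sum.cong refl) (simp add: kc_def power_minus[of b] mult_ac)
  qed
  also have "\<dots> = (\<Sum>jl\<in>T g. kc x g jl * a^fst jl * b^snd jl)"
    unfolding T_def by (subst sum.Sigma) (auto simp: case_prod_unfold)
  finally show ?thesis .
qed

definition mono :: "nat ^ 'n \<Rightarrow> 'a::comm_ring_1 ^ 'n \<Rightarrow> 'a" where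
  "mono al a = (\<Prod>i\<in>UNIV. (a $ i) ^ (al $ i))"

definition al :: "(nat ^ 'n) \<times> ('n \<Rightarrow> nat \<times> nat) \<Rightarrow> nat ^ 'n" where
  "al s = (\<chi> i. fst (snd s i))"
definition be :: "(nat ^ 'n) \<times> ('n \<Rightarrow> nat \<times> nat) \<Rightarrow> nat ^ 'n" where
  "be s = (\<chi> i. snd (snd s i))"
definition w :: "'a::comm_ring_1 ^ 'n \<Rightarrow> (nat ^ 'n \<Rightarrow> 'a) \<Rightarrow> (nat ^ 'n) \<times> ('n \<Rightarrow> nat \<times> nat) \<Rightarrow> 'a" where
  "w x c s = c (fst s) * (\<Prod>i\<in>UNIV. kc (x $ i) (fst s $ i) (snd s i))"

lemma finite_bounded_vec: "finite {a :: nat ^ 'n :: finite. \<forall>i. a $ i \<le> K}"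
proof -
  have "{a :: nat ^ 'n. \<forall>i. a $ i \<le> K} \<subseteq> vec_lambda ` PiE UNIV (\<lambda>_. {..K})"
  proof
    fix a :: "nat ^ 'n" assume "a \<in> {a. \<forall>i. a $ i \<le> K}"
    hence "(\<lambda>i. a $ i) \<in> PiE UNIV (\<lambda>_. {..K})" by auto
    moreover have "a = vec_lambda (\<lambda>i. a $ i)" by simp
    ultimately show "a \<in> vec_lambda ` PiE UNIV (\<lambda>_. {..K})" by blast
  qed
  thus ?thesis by (rule finite_subset) (simp add: finite_PiE)
qed

lemma finite_reduced_monos: "finite (reduced_monos q d :: (nat ^ 'n :: finite) set)"
  by (rule finite_subset[OF _ finite_bounded_vec[of "q-1"]]) (auto simp: reduced_monos_def)

lemma expand:
  fixes c :: "nat ^ 'n \<Rightarrow> 'a::comm_ring_1" and x a b :: "'a ^ 'n"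
  shows "poly_eval q d c (x + a - b) =
    (\<Sum>s\<in>Sigma (reduced_monos q d) (\<lambda>\<gamma>. PiE UNIV (\<lambda>i. T (\<gamma> $ i))). w x c s * mono (al s) a * mono (be s) b)"
proof -
  have "poly_eval q d c (x + a - b) = (\<Sum>\<gamma>\<in>reduced_monos q d. c \<gamma> * (\<Prod>i\<in>UNIV. (x $ i + a $ i - b $ i) ^ (\<gamma> $ i)))"
    by (simp add: poly_eval_def)
  also have "\<dots> = (\<Sum>\<gamma>\<in>reduced_monos q d. c \<gamma> * (\<Sum>p\<in>PiE UNIV (\<lambda>i. T (\<gamma> $ i)). \<Prod>i\<in>UNIV. kc (x$i) (\<gamma>$i) (p i) * a$i^fst (p i) * b$i^snd (p i)))"
    by (intro sum.cong refl arg_cong2[where f="(*)"]) (simp_all add: coord prod_sum_PiE finite_T)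
  also have "\<dots> = (\<Sum>\<gamma>\<in>reduced_monos q d. \<Sum>p\<in>PiE UNIV (\<lambda>i. T (\<gamma> $ i)). w x c (\<gamma>, p) * mono (al (\<gamma>, p)) a * mono (be (\<gamma>, p)) b)"
    unfolding sum_distrib_left
  proof (intro sum.cong refl)
    fix \<gamma> p
    show "c \<gamma> * (\<Prod>i\<in>UNIV. kc (x$i) (\<gamma>$i) (p i) * a$i^fst (p i) * b$i^snd (p i)) = w x c (\<gamma>, p) * mono (al (\<gamma>, p)) a * mono (be (\<gamma>, p)) b"
      by (simp only: w_def mono_def al_def be_def prod.distrib vec_lambda_beta fst_conv snd_conv mult.assoc)
  qed
  also have "\<dots> = (\<Sum>s\<in>Sigma (reduced_monos q d) (\<lambda>\<gamma>. PiE UNIV (\<lambda>i. T (\<gamma> $ i))). w x c s * mono (al s) a * mono (be s) b)"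
    by (subst sum.Sigma) (auto simp: finite_reduced_monos finite_PiE finite_T case_prod_unfold)
  finally show ?thesis .
qed

lemma card_M:
  "card {al :: nat ^ 'n::finite. (\<forall>i. al $ i \<le> q - 1) \<and> 2 * (\<Sum>i\<in>UNIV. al $ i) \<le> d}
     \<le> m_count (real d / 2) q CARD('n)"
proof -
  let ?M = "{al :: nat ^ 'n::finite. (\<forall>i. al $ i \<le> q - 1) \<and> 2 * (\<Sum>i\<in>UNIV. al $ i) \<le> d}"
  let ?n = "CARD('n)"
  obtain e where e: "bij_betw e {..<?n} (UNIV::'n set)"
    using ex_bij_betw_nat_finite[of "UNIV::'n set"] by (auto simp: atLeast0LessThan)
  define f where "f al = (\<lambda>k. if k < ?n then al $ e k else 0)" for al :: "nat^'n"
  define B where "B = {a :: nat \<Rightarrow> nat. (\<forall>i<?n. a i \<le> q - 1) \<and> (\<forall>i\<ge>?n. a i = 0)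
                                 \<and> real (\<Sum>i<?n. a i) \<le> real d / 2}"
  have sumf: "(\<Sum>k<?n. f al k) = (\<Sum>i\<in>UNIV. al $ i)" for al
  proof -
    have "(\<Sum>k<?n. f al k) = (\<Sum>k<?n. al $ e k)" by (simp add: f_def)
    also have "\<dots> = (\<Sum>i\<in>UNIV. al $ i)" by (rule sum.reindex_bij_betw[OF e])
    finally show ?thesis .
  qed
  have "card ?M \<le> card B"
  proof (rule card_inj_on_le)
    show "inj_on f ?M"
    proof
      fix al be :: "nat^'n" assume "f al = f be"
      show "al = be"
      proof (rule vec_eq_iff[THEN iffD2], rule allI)
        fix i
        obtain k where "k < ?n" "e k = i" using e unfolding bij_betw_def by (metis UNIV_I imageE lessThan_iff)
        thus "al $ i = be $ i" using fun_cong[OF \<open>f al = f be\<close>, of k] by (simp add: f_def)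
      qed
    qed
    show "f ` ?M \<subseteq> B"
    proof
      fix y assume "y \<in> f ` ?M"
      then obtain al where al: "al \<in> ?M" "y = f al" by blast
      have "real (\<Sum>k<?n. f al k) \<le> real d / 2" unfolding sumf
        proof -
          have "2 * (\<Sum>i\<in>UNIV. al $ i) \<le> d" using al(1) by simp
          hence "real (2 * (\<Sum>i\<in>UNIV. al $ i)) \<le> real d" by (simp only: of_nat_le_iff)
          thus "real (\<Sum>i\<in>UNIV. al $ i) \<le> real d / 2" by (simp only: of_nat_mult)
        qed
      thus "y \<in> B" using al by (auto simp: B_def f_def)
    qed
    have "B \<subseteq> (\<lambda>g k. if k < ?n then g k else 0) ` PiE {..<?n} (\<lambda>_. {..q-1})"
    proof
      fix a assume a: "a \<in> B"
      have "a = (\<lambda>k. if k < ?n then restrict a {..<?n} k else 0)" using a by (auto simp: B_def)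
      moreover have "restrict a {..<?n} \<in> PiE {..<?n} (\<lambda>_. {..q-1})" using a by (auto simp: B_def)
      ultimately show "a \<in> (\<lambda>g k. if k < ?n then g k else 0) ` PiE {..<?n} (\<lambda>_. {..q-1})" by blast
    qed
    thus "finite B" by (rule finite_subset) (simp add: finite_PiE)
  qed
  thus ?thesis by (simp add: m_count_def B_def)
qed

theorem mainTheorem5:
  fixes S :: "(('a::{field,finite} ^ 'n) \<times> ('a ^ 'n)) set"
    and q d :: nat
    and c :: "nat ^ 'n \<Rightarrow> 'a"
  assumes q_prime: "prime q"
    and card_field: "CARD('a) = q"
    and no_corner: "\<not> (\<exists>x y y' e. e \<noteq> 0 \<and> (x, y) \<in> S \<and> (x, y + e) \<in> S \<and> (x + e, y') \<in> S)"
    and vanish: "\<forall>z. z \<notin> fst ` S \<longrightarrow> poly_eval q d c z = 0"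
  shows "\<forall>x \<in> fst ` S. poly_eval q d c x \<noteq> 0 \<longrightarrow>
           real (card {y. (x, y) \<in> S}) \<le> 2 * real (m_count (real d / 2) q CARD('n))"
proof (intro ballI impI)
  fix x assume xS: "x \<in> fst ` S" and Px: "poly_eval q d c x \<noteq> 0"
  define C where "C = {y. (x,y) \<in> S}"
  define M where "M = {al :: nat^'n. (\<forall>i. al$i \<le> q-1) \<and> 2 * (\<Sum>i\<in>UNIV. al$i) \<le> d}"
  define I where "I = Sigma (reduced_monos q d :: (nat^'n) set) (\<lambda>\<gamma>. PiE UNIV (\<lambda>i. T (\<gamma> $ i)))"
  have "card C \<le> 2 * card M"
  proof (rule count_lemma[where F = "\<lambda>a b. poly_eval q d c (x + a - b)" and I=I and w = "w x c"
        and u = mono and \<alpha> = al and \<beta> = be and z = "poly_eval q d c x"])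
    show "finite C" by simp
    show "finite I" unfolding I_def
      by (intro finite_SigmaI) (auto simp: finite_reduced_monos finite_PiE finite_T)
    show "finite M" unfolding M_def
      by (rule finite_subset[OF _ finite_bounded_vec[of "q-1"]]) auto
    show "poly_eval q d c x \<noteq> 0" by (rule Px)
    show "poly_eval q d c (x + a - b) = (if a = b then poly_eval q d c x else 0)"
      if a: "a \<in> C" and b: "b \<in> C" for a b
    proof (cases "a = b")
      case True thus ?thesis by simp
    next
      case False
      have "x + a - b \<notin> fst ` S"
      proof
        assume "x + a - b \<in> fst ` S"
        then obtain y' where y': "(x + (a - b), y') \<in> S" by (force simp: add_diff_eq)
        have "a - b \<noteq> 0" using False by simp
        moreover have "(x, b) \<in> S" "(x, b + (a - b)) \<in> S" using a b by (simp_all add: C_def)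
        ultimately show False using no_corner y' by blast
      qed
      thus ?thesis using vanish False by simp
    qed
    show "poly_eval q d c (x + a - b) = (\<Sum>s\<in>I. w x c s * mono (al s) a * mono (be s) b)" for a b
      unfolding I_def by (rule expand)
    show "al s \<in> M \<or> be s \<in> M" if s: "s \<in> I" for s
    proof -
      obtain \<gamma> p where sp: "s = (\<gamma>, p)" and g: "\<gamma> \<in> reduced_monos q d" and p: "p \<in> PiE UNIV (\<lambda>i. T (\<gamma> $ i))"
        using s by (auto simp: I_def)
      have le: "fst (p i) + snd (p i) \<le> \<gamma> $ i" for i using p T_le by blast
      have gq: "\<gamma> $ i \<le> q - 1" for i using g by (simp add: reduced_monos_def)
      have gd: "(\<Sum>i\<in>UNIV. \<gamma> $ i) \<le> d" using g by (simp add: reduced_monos_def)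
      have "(\<Sum>i\<in>UNIV. al s $ i) + (\<Sum>i\<in>UNIV. be s $ i) = (\<Sum>i\<in>UNIV. fst (p i) + snd (p i))"
        by (simp add: sp al_def be_def sum.distrib)
      also have "\<dots> \<le> (\<Sum>i\<in>UNIV. \<gamma> $ i)" by (rule sum_mono) (rule le)
      finally have tot: "(\<Sum>i\<in>UNIV. al s $ i) + (\<Sum>i\<in>UNIV. be s $ i) \<le> d" using gd by linarith
      have "al s $ i \<le> q - 1" "be s $ i \<le> q - 1" for i
        using le[of i] gq[of i] by (simp_all add: sp al_def be_def)
      thus ?thesis using tot by (auto simp: M_def)
    qed
  qed
  moreover have "card M \<le> m_count (real d / 2) q CARD('n)"
    unfolding M_def by (rule card_M)
  ultimately show "real (card {y. (x, y) \<in> S}) \<le> 2 * real (m_count (real d / 2) q CARD('n))"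
    by (simp add: C_def)
qed
end
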